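(* Let $a,b,x$ be non-commuting indeterminates and let $D\in\mathbb{Z}\langle\langle a,b,x\rangle\rangle$ be the unique series satisfying $$D=1+(x-ab+aDb)\,D$$ (equivalently, $D$ is the sum of all Dyck words in $a,b$ in which every occurrence of the factor $ab$ is replaced by $x$). Define $U\in\mathbb{Z}\langle\langle a,b,x\rangle\rangle$ by $(1-aDb)^{-1}=1+aUb$. Then $$U=(1+aUb)\big(1+(x-ab+ba)U\big),$$ and this equation determines $U$ uniquely.
   Context: $\mathbb{Z}\langle\langle a,b,x\rangle\rangle$ is the ring of formal power series in non-commuting variables $a,b,x$ with integer coefficients. A Dyck word is a word in $a,b$ with equally many $a$'s and $b$'s such that every prefix has at least as many $a$'s as $b$'s (equivalently, a lattice path with steps $a=(1,1)$, $b=(1,-1)$ from the origin back to the $x$-axis never going below it); the empty word is included. *)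

theory Defs
  imports Main
begin

datatype letter = LA | LB | LX

type_synonym ncps = "letter list \<Rightarrow> int"

definition nc_one :: ncps where
  "nc_one w = (if w = [] then 1 else 0)"

definition nc_var :: "letter \<Rightarrow> ncps" where
  "nc_var c w = (if w = [c] then 1 else 0)"

definition nc_a :: ncps where "nc_a = nc_var LA"
definition nc_b :: ncps where "nc_b = nc_var LB"
definition nc_x :: ncps where "nc_x = nc_var LX"

definition nc_add :: "ncps \<Rightarrow> ncps \<Rightarrow> ncps" (infixl "\<oplus>" 65) where
  "nc_add f g w = f w + g w"

definition nc_sub :: "ncps \<Rightarrow> ncps \<Rightarrow> ncps" (infixl "\<ominus>" 65) where
  "nc_sub f g w = f w - g w"

definition nc_mul :: "ncps \<Rightarrow> ncps \<Rightarrow> ncps" (infixl "\<otimes>" 70) where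
  "nc_mul f g w = (\<Sum>i\<le>length w. f (take i w) * g (drop i w))"

end

theory Submission imports Defs begin

lemma tri_sum: "(\<Sum>i\<le>n. \<Sum>j\<le>i. G j (i-j)) = (\<Sum>j\<le>(n::nat). \<Sum>k\<le>n-j. (G j k :: int))"
proof (induction n)
  case 0 then show ?case by simp
next
  case (Suc n)
  have "(\<Sum>j\<le>Suc n. \<Sum>k\<le>Suc n-j. G j k) = (\<Sum>j\<le>n. \<Sum>k\<le>Suc n-j. G j k) + G (Suc n) 0" by simp
  also have "(\<Sum>j\<le>n. \<Sum>k\<le>Suc n-j. G j k) = (\<Sum>j\<le>n. (\<Sum>k\<le>n-j. G j k) + G j (Suc n - j))"
    by (rule sum.cong) (auto simp: Suc_diff_le)
  finally show ?case using Suc by (simp add: sum.distrib)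
qed

lemma nc_mul_assoc: "nc_mul (nc_mul f g) h = nc_mul f (nc_mul g h)"
proof
  fix w :: "letter list"
  define n where "n = length w"
  have "nc_mul (nc_mul f g) h w = (\<Sum>i\<le>n. \<Sum>j\<le>i. f (take j w) * g (take (i-j) (drop j w)) * h (drop (i-j) (drop j w)))"
    unfolding nc_mul_def n_def
    by (rule sum.cong, simp, auto simp: sum_distrib_right min_def take_drop intro!: sum.cong)
  also have "\<dots> = (\<Sum>j\<le>n. \<Sum>k\<le>n-j. f (take j w) * g (take k (drop j w)) * h (drop k (drop j w)))"
    by (rule tri_sum)
  also have "\<dots> = nc_mul f (nc_mul g h) w"
    unfolding nc_mul_def n_def
    by (auto simp: sum_distrib_left mult.assoc intro!: sum.cong)
  finally show "nc_mul (nc_mul f g) h w = nc_mul f (nc_mul g h) w" .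
qed


lemma mul_add_l: "nc_mul (nc_add f g) h = nc_add (nc_mul f h) (nc_mul g h)"
  by (auto simp: nc_mul_def nc_add_def fun_eq_iff sum.distrib algebra_simps)
lemma mul_add_r: "nc_mul h (nc_add f g) = nc_add (nc_mul h f) (nc_mul h g)"
  by (auto simp: nc_mul_def nc_add_def fun_eq_iff sum.distrib algebra_simps)
lemma mul_one_l: "nc_mul nc_one f = f"
proof
  fix w
  have "nc_mul nc_one f w = (\<Sum>i\<le>length w. if i = 0 then f w else 0)"
    unfolding nc_mul_def nc_one_def by (rule sum.cong) auto
  then show "nc_mul nc_one f w = f w" by simp
qed
lemma mul_one_r: "nc_mul f nc_one = f"
proof
  fix w
  have "nc_mul f nc_one w = (\<Sum>i\<le>length w. if i = length w then f w else 0)"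
    unfolding nc_mul_def nc_one_def by (rule sum.cong) auto
  then show "nc_mul f nc_one w = f w" by simp
qed

typedef ncs = "UNIV :: ncps set" by simp
setup_lifting type_definition_ncs

instantiation ncs :: ring_1
begin
lift_definition zero_ncs :: ncs is "\<lambda>w. 0" .
lift_definition one_ncs :: ncs is nc_one .
lift_definition plus_ncs :: "ncs \<Rightarrow> ncs \<Rightarrow> ncs" is nc_add .
lift_definition minus_ncs :: "ncs \<Rightarrow> ncs \<Rightarrow> ncs" is nc_sub .
lift_definition uminus_ncs :: "ncs \<Rightarrow> ncs" is "\<lambda>f w. - f w" .
lift_definition times_ncs :: "ncs \<Rightarrow> ncs \<Rightarrow> ncs" is nc_mul .
instance
proof
  fix a b c :: ncs
  show "a * b * c = a * (b * c)" by transfer (rule nc_mul_assoc)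
  show "(a + b) * c = a * c + b * c" by transfer (rule mul_add_l)
  show "a * (b + c) = a * b + a * c" by transfer (rule mul_add_r)
  show "1 * a = a" by transfer (rule mul_one_l)
  show "a * 1 = a" by transfer (rule mul_one_r)
  show "a + b + c = a + (b + c)" by transfer (auto simp: nc_add_def)
  show "a + b = b + a" by transfer (auto simp: nc_add_def)
  show "0 + a = a" by transfer (auto simp: nc_add_def)
  show "- a + a = 0" by transfer (auto simp: nc_add_def)
  show "a - b = a + - b" by transfer (auto simp: nc_add_def nc_sub_def)
  show "(0::ncs) \<noteq> 1" by transfer (auto simp: nc_one_def fun_eq_iff)
qed
end

lemma var_l: "nc_mul (nc_var c) f (c' # w) = (if c = c' then f w else 0)"
proof -
  have "nc_mul (nc_var c) f (c' # w) = (\<Sum>i\<le>length (c'#w). if i = 1 then (if c = c' then f w else 0) else 0)"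
    unfolding nc_mul_def nc_var_def
    by (rule sum.cong) (auto simp: take_Cons' split: if_splits)
  then show ?thesis by (subst (asm) sum.delta) auto
qed
lemma var_r: "nc_mul f (nc_var c) (w @ [c']) = (if c = c' then f w else 0)"
proof -
  have "nc_mul f (nc_var c) (w @ [c']) = (\<Sum>i\<le>length (w@[c']). if i = length w then (if c = c' then f w else 0) else 0)"
    unfolding nc_mul_def nc_var_def
  proof (rule sum.cong)
    fix i assume "i \<in> {..length (w@[c'])}"
    then have "i \<le> Suc (length w)" by simp
    then consider "i \<le> length w - 1" "i < length w" | "i = length w" | "i = Suc (length w)" by linarith
    then show "f (take i (w @ [c'])) * (if drop i (w @ [c']) = [c] then 1 else 0) =
          (if i = length w then if c = c' then f w else 0 else 0)"
    proof cases
      case 1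
      then have "length (drop i (w @ [c'])) \<ge> 2" by simp
      then show ?thesis using 1 by auto
    qed auto
  qed simp
  then show ?thesis by (subst (asm) sum.delta) auto
qed

lemma cancel_ab: "Abs_ncs nc_a * f * Abs_ncs nc_b = Abs_ncs nc_a * g * Abs_ncs nc_b \<Longrightarrow> f = g"
proof transfer
  fix f g
  assume h: "nc_mul (nc_mul nc_a f) nc_b = nc_mul (nc_mul nc_a g) nc_b"
  show "f = g"
  proof
    fix w
    from h have "nc_mul (nc_mul nc_a f) nc_b (LA # w @ [LB]) = nc_mul (nc_mul nc_a g) nc_b (LA # w @ [LB])" by simp
    then show "f w = g w" unfolding nc_a_def nc_b_def
      using var_l var_r by (metis append_Cons)
  qed
qed


lemma abs_add: "Abs_ncs (nc_add f g) = Abs_ncs f + Abs_ncs g"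
  by (simp add: plus_ncs_def Abs_ncs_inverse)
lemma abs_sub: "Abs_ncs (nc_sub f g) = Abs_ncs f - Abs_ncs g"
  by (simp add: minus_ncs_def Abs_ncs_inverse)
lemma abs_mul: "Abs_ncs (nc_mul f g) = Abs_ncs f * Abs_ncs g"
  by (simp add: times_ncs_def Abs_ncs_inverse)
lemma abs_one: "Abs_ncs nc_one = 1"
  by (simp add: one_ncs_def)
lemmas abs_simps = abs_add abs_sub abs_mul abs_one

definition agree :: "nat \<Rightarrow> ncps \<Rightarrow> ncps \<Rightarrow> bool" where
  "agree n f g = (\<forall>w. length w < n \<longrightarrow> f w = g w)"

lemma agree_mul: "agree n f f' \<Longrightarrow> agree n g g' \<Longrightarrow> agree n (nc_mul f g) (nc_mul f' g')"
  unfolding agree_def nc_mul_def by (auto intro!: sum.cong)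
lemma agree_add: "agree n f f' \<Longrightarrow> agree n g g' \<Longrightarrow> agree n (nc_add f g) (nc_add f' g')"
  unfolding agree_def nc_add_def by auto
lemma agree_refl: "agree n f f" unfolding agree_def by auto
lemma agree_shift: assumes "h [] = 0" "agree n f g" shows "agree (Suc n) (nc_mul h f) (nc_mul h g)"
  unfolding agree_def nc_mul_def
proof (intro allI impI sum.cong refl)
  fix w :: "letter list" and i assume "length w < Suc n" "i \<in> {..length w}"
  then show "h (take i w) * f (drop i w) = h (take i w) * g (drop i w)"
    using assms by (cases i) (auto simp: agree_def)
qed

lemma uniq:
  fixes K :: ncps
  assumes K0: "K [] = 0"
    and hV: "V = nc_mul (nc_add nc_one (nc_mul (nc_mul nc_a V) nc_b)) (nc_add nc_one (nc_mul K V))"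
    and hU: "U = nc_mul (nc_add nc_one (nc_mul (nc_mul nc_a U) nc_b)) (nc_add nc_one (nc_mul K U))"
  shows "V = U"
proof -
  have a0: "nc_a [] = 0" by (simp add: nc_a_def nc_var_def)
  have "agree n V U" for n
  proof (induction n)
    case 0 then show ?case by (simp add: agree_def)
  next
    case (Suc n)
    have "agree (Suc n) (nc_mul (nc_add nc_one (nc_mul (nc_mul nc_a V) nc_b)) (nc_add nc_one (nc_mul K V)))
       (nc_mul (nc_add nc_one (nc_mul (nc_mul nc_a U) nc_b)) (nc_add nc_one (nc_mul K U)))"
      by (intro agree_mul agree_add agree_refl agree_shift Suc a0 K0)
    then show ?case using hV hU by simp
  qed
  then show ?thesis by (auto simp: agree_def fun_eq_iff)
qed

theorem theorem4:
  fixes D U :: ncps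
  assumes hD: "D = nc_one \<oplus> ((nc_x \<ominus> nc_a \<otimes> nc_b \<oplus> nc_a \<otimes> D \<otimes> nc_b) \<otimes> D)"
    and hU1: "(nc_one \<ominus> nc_a \<otimes> D \<otimes> nc_b) \<otimes> (nc_one \<oplus> nc_a \<otimes> U \<otimes> nc_b) = nc_one"
    and hU2: "(nc_one \<oplus> nc_a \<otimes> U \<otimes> nc_b) \<otimes> (nc_one \<ominus> nc_a \<otimes> D \<otimes> nc_b) = nc_one"
  shows "U = (nc_one \<oplus> nc_a \<otimes> U \<otimes> nc_b) \<otimes>
             (nc_one \<oplus> (nc_x \<ominus> nc_a \<otimes> nc_b \<oplus> nc_b \<otimes> nc_a) \<otimes> U)
    \<and> (\<forall>V :: ncps. V = (nc_one \<oplus> nc_a \<otimes> V \<otimes> nc_b) \<otimes>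
             (nc_one \<oplus> (nc_x \<ominus> nc_a \<otimes> nc_b \<oplus> nc_b \<otimes> nc_a) \<otimes> V) \<longrightarrow> V = U)"
proof
  define A B X d u where "A = Abs_ncs nc_a" "B = Abs_ncs nc_b" "X = Abs_ncs nc_x"
    "d = Abs_ncs D" "u = Abs_ncs U"
  define E P Q where "E = X - A*B" "P = A*d*B" "Q = A*u*B"
  have d: "d = 1 + (E + P) * d"
    using arg_cong[OF hD, of Abs_ncs] unfolding abs_simps A_B_X_d_u_def E_P_Q_def .
  have u1: "(1 - P) * (1 + Q) = 1"
    using arg_cong[OF hU1, of Abs_ncs] unfolding abs_simps A_B_X_d_u_def E_P_Q_def .
  have u2: "(1 + Q) * (1 - P) = 1"
    using arg_cong[OF hU2, of Abs_ncs] unfolding abs_simps A_B_X_d_u_def E_P_Q_def .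
  have "Q = P + P * Q" using u1 by (simp add: algebra_simps)
  then have "A * u * B = A * (d + d * (B * A) * u) * B"
    unfolding E_P_Q_def by (simp add: algebra_simps)
  then have ud: "u = d * (1 + B * A * u)" using cancel_ab unfolding A_B_X_d_u_def
    by (simp add: algebra_simps)
  have dinv: "(1 - E - P) * d = 1" using d by (simp add: algebra_simps)
  have "(1 - E - P) * u = 1 + B * A * u"
    by (subst ud) (simp only: mult.assoc[symmetric] dinv mult_1_left)
  then have k: "1 + (E + B * A) * u = (1 - P) * u" by (simp add: algebra_simps)
  have "(1 + Q) * (1 + (E + B * A) * u) = u"
    by (simp only: k mult.assoc[symmetric] u2 mult_1_left)
  then have "Abs_ncs U = Abs_ncs ((nc_one \<oplus> nc_a \<otimes> U \<otimes> nc_b) \<otimes>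
             (nc_one \<oplus> (nc_x \<ominus> nc_a \<otimes> nc_b \<oplus> nc_b \<otimes> nc_a) \<otimes> U))"
    unfolding abs_simps A_B_X_d_u_def E_P_Q_def by simp
  then show "U = (nc_one \<oplus> nc_a \<otimes> U \<otimes> nc_b) \<otimes>
             (nc_one \<oplus> (nc_x \<ominus> nc_a \<otimes> nc_b \<oplus> nc_b \<otimes> nc_a) \<otimes> U)"
    by (simp add: Abs_ncs_inject)
  note exU = this
  have K0: "(nc_x \<ominus> nc_a \<otimes> nc_b \<oplus> nc_b \<otimes> nc_a) [] = 0"
    by (simp add: nc_add_def nc_sub_def nc_mul_def nc_a_def nc_b_def nc_x_def nc_var_def)
  show "\<forall>V :: ncps. V = (nc_one \<oplus> nc_a \<otimes> V \<otimes> nc_b) \<otimes>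
             (nc_one \<oplus> (nc_x \<ominus> nc_a \<otimes> nc_b \<oplus> nc_b \<otimes> nc_a) \<otimes> V) \<longrightarrow> V = U"
    using uniq[OF K0 _ exU] by blast
qed

end
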